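(* Let $p=\infty$. For every finite $S\subset\mathcal X$ and every $t\ge 0$, \[ \mathrm{VR}_t(S,d_\theta)=\mathrm{VR}_t(S_{\mathcal C},\beta)\cup \mathrm{VR}_t(S_{\mathcal Y},d_{\mathrm{reg}})\cup\Bigl(\mathrm{VR}_t(S_{\mathcal C}^{\le t},\beta)\star \mathrm{VR}_t(S_{\mathcal Y}^{\le t},d_{\mathrm{reg}})\Bigr). \]
   Context: Let $A$ be a unital $C^*$-algebra, $H$ a Hilbert space, $\mathcal X=\mathrm{CB}(A,B(H))$, $\mathcal C=\mathrm{CP}(A,B(H))$ with Bures distance $\beta$. Fix $\theta\in\mathcal C$, $\lambda>0$, $\alpha\in(0,1]$, and let $d_\theta=\beta^{BK}_{\theta,\lambda,\infty,\alpha}$ be the Bures--Kuratowski metric with $p=\infty$. It satisfies $d_\theta=\beta$ on $\mathcal C$, $d_\theta=d_{\mathrm{reg}}:=\lambda\delta_{\mathrm{reg}}^\alpha$ on $\mathcal X\setminus\mathcal C$ ($\delta_{\mathrm{reg}}$ the regular-representation metric), and $d_\theta(x,y)=\max\{r_{\mathcal C}(x),r_{\mathcal Y}(y)\}$ for $x\in\mathcal C$, $y\notin\mathcal C$, where $r_{\mathcal C}(x)=\beta(x,\theta)$, $r_{\mathcal Y}(y)=\lambda\delta_{\mathrm{reg}}(y,0)^\alpha$. $S_{\mathcal C}=S\cap\mathcal C$, $S_{\mathcal Y}=S\cap(\mathcal X\setminus\mathcal C)$, $S_{\mathcal C}^{\le t}=\{x\in S_{\mathcal C}:r_{\mathcal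 C}(x)\le t\}$, $S_{\mathcal Y}^{\le t}=\{y\in S_{\mathcal Y}:r_{\mathcal Y}(y)\le t\}$. $\mathrm{VR}_t$ denotes the Vietoris--Rips complex (finite subsets of diameter $\le t$), and for complexes $K,L$ on disjoint vertex sets $K\star L=\{\sigma\cup\tau:\sigma\in K,\tau\in L,\ \sigma,\tau\neq\varnothing\}$. *)

theory Defs
  imports Complex_Main
begin

text \<open>The ambient space X = CB(A,B(H)) is a type 'a
 with a distinguished zero map 0; C = CP(A,B(H)) is a subset of it; beta is the Bures
 distance (a metric on C); delta is the regular-representation metric on X.\<close>

definition is_metric_on :: "'a set \<Rightarrow> ('a \<Rightarrow> 'a \<Rightarrow> real) \<Rightarrow> bool" where
  "is_metric_on M d \<longleftrightarrow>
     (\<forall>x\<in>M. \<forall>y\<in>M. 0 \<le> d x y \<and> d x y = d y x \<and> (d x y = 0 \<longleftrightarrow> x = y)) \<and>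
     (\<forall>x\<in>M. \<forall>y\<in>M. \<forall>z\<in>M. d x z \<le> d x y + d y z)"

definition d_reg :: "real \<Rightarrow> real \<Rightarrow> ('a \<Rightarrow> 'a \<Rightarrow> real) \<Rightarrow> 'a \<Rightarrow> 'a \<Rightarrow> real" where
  "d_reg lam alpha delta x y = lam * (delta x y) powr alpha"

definition r_C :: "('a \<Rightarrow> 'a \<Rightarrow> real) \<Rightarrow> 'a \<Rightarrow> 'a \<Rightarrow> real" where
  "r_C beta theta x = beta x theta"

definition r_Y :: "real \<Rightarrow> real \<Rightarrow> ('a \<Rightarrow> 'a \<Rightarrow> real) \<Rightarrow> 'a::zero \<Rightarrow> real" where
  "r_Y lam alpha delta y = lam * (delta y 0) powr alpha"

text \<open>Bures--Kuratowski metric with p = infinity, via its stated description.\<close>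
definition d_theta :: "'a::zero set \<Rightarrow> ('a \<Rightarrow> 'a \<Rightarrow> real) \<Rightarrow> ('a \<Rightarrow> 'a \<Rightarrow> real)
     \<Rightarrow> 'a \<Rightarrow> real \<Rightarrow> real \<Rightarrow> 'a \<Rightarrow> 'a \<Rightarrow> real" where
  "d_theta C beta delta theta lam alpha x y =
     (if x \<in> C \<and> y \<in> C then beta x y
      else if x \<notin> C \<and> y \<notin> C then d_reg lam alpha delta x y
      else if x \<in> C then max (r_C beta theta x) (r_Y lam alpha delta y)
      else max (r_C beta theta y) (r_Y lam alpha delta x))"

definition VR :: "'a set \<Rightarrow> ('a \<Rightarrow> 'a \<Rightarrow> real) \<Rightarrow> real \<Rightarrow> 'a set set" where
  "VR S d t = {\<sigma>. \<sigma> \<subseteq> S \<and> finite \<sigma> \<and> \<sigma> \<noteq> {} \<and> (\<forall>x\<in>\<sigma>. \<forall>y\<in>\<sigma>. d x y \<le> t)}"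

definition join :: "'a set set \<Rightarrow> 'a set set \<Rightarrow> 'a set set" (infixl "\<star>" 65) where
  "K \<star> L = {\<sigma> \<union> \<tau> | \<sigma> \<tau>. \<sigma> \<in> K \<and> \<tau> \<in> L \<and> \<sigma> \<noteq> {} \<and> \<tau> \<noteq> {}}"

end

theory Submission
  imports Defs
begin

theorem corollary6p7:
  fixes C :: "'a::zero set" and beta delta :: "'a \<Rightarrow> 'a \<Rightarrow> real"
    and theta :: 'a and lam alpha t :: real and S :: "'a set"
  assumes "is_metric_on C beta" and "is_metric_on UNIV delta"
    and "0 \<in> C" and "theta \<in> C" and "lam > 0" and "0 < alpha" and "alpha \<le> 1"
    and "finite S" and "t \<ge> 0"
  shows "VR S (d_theta C beta delta theta lam alpha) t =
           VR (S \<inter> C) beta t \<union> VR (S - C) (d_reg lam alpha delta) t \<union>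
           (VR {x \<in> S \<inter> C. r_C beta theta x \<le> t} beta t \<star>
            VR {y \<in> S - C. r_Y lam alpha delta y \<le> t} (d_reg lam alpha delta) t)"
proof (rule set_eqI)
  fix \<sigma>
  let ?d = "d_theta C beta delta theta lam alpha"
  let ?L = "VR {x \<in> S \<inter> C. r_C beta theta x \<le> t} beta t"
  let ?R = "VR {y \<in> S - C. r_Y lam alpha delta y \<le> t} (d_reg lam alpha delta) t"
  show "\<sigma> \<in> VR S ?d t \<longleftrightarrow> \<sigma> \<in> VR (S \<inter> C) beta t \<union> VR (S - C) (d_reg lam alpha delta) t \<union> (?L \<star> ?R)"
  proof
    assume h: "\<sigma> \<in> VR S ?d t"
    show "\<sigma> \<in> VR (S \<inter> C) beta t \<union> VR (S - C) (d_reg lam alpha delta) t \<union> (?L \<star> ?R)"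
    proof (cases "\<sigma> \<subseteq> C")
      case True
      then have "\<sigma> \<in> VR (S \<inter> C) beta t" using h unfolding VR_def d_theta_def by (auto split: if_splits)
      then show ?thesis by blast
    next
      case F1: False
      show ?thesis
      proof (cases "\<sigma> \<inter> C = {}")
        case True
        then have "\<sigma> \<in> VR (S - C) (d_reg lam alpha delta) t" using h unfolding VR_def d_theta_def
          by (auto split: if_splits)
        then show ?thesis by blast
      next
        case False
        then obtain a where a: "a \<in> \<sigma>" "a \<in> C" by blast
        from F1 obtain b where b: "b \<in> \<sigma>" "b \<notin> C" by blast
        have "\<sigma> \<inter> C \<in> ?L"
          using h a b unfolding VR_def d_theta_def
          by (auto split: if_splits)
        moreover have "\<sigma> - C \<in> ?R"
          using h a b unfolding VR_def d_theta_def
          by (auto split: if_splits)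
        moreover have "\<sigma> = (\<sigma> \<inter> C) \<union> (\<sigma> - C)" by blast
        ultimately have "\<sigma> \<in> ?L \<star> ?R" unfolding join_def using a b by blast
        then show ?thesis by blast
      qed
    qed
  next
    assume h: "\<sigma> \<in> VR (S \<inter> C) beta t \<union> VR (S - C) (d_reg lam alpha delta) t \<union> (?L \<star> ?R)"
    show "\<sigma> \<in> VR S ?d t"
    proof -
      { assume "\<sigma> \<in> VR (S \<inter> C) beta t"
        then have ?thesis unfolding VR_def d_theta_def by auto }
      moreover
      { assume "\<sigma> \<in> VR (S - C) (d_reg lam alpha delta) t"
        then have ?thesis unfolding VR_def d_theta_def by auto }
      moreover
      { assume "\<sigma> \<in> ?L \<star> ?R"
        then obtain s1 s2 where s: "\<sigma> = s1 \<union> s2" "s1 \<in> ?L" "s2 \<in> ?R"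
          unfolding join_def by blast
        then have ?thesis unfolding VR_def d_theta_def by auto }
      ultimately show ?thesis using h by blast
    qed
  qed
qed

end
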